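(* Fix $n\ge 1$. The set $\{\beta^k\,\mathcal{G}^{(\beta)}_a : k\in\mathbb{Z}_{\ge 0},\ a \text{ a weak composition of length } n\}$ is a basis of the free $\mathbb{Z}$-module $\mathbb{Z}[x_1,\dots,x_n][\beta]$. Consequently, $\{\mathcal{G}^{(-1)}_a : a \text{ a weak composition of length } n\}$ is a $\mathbb{Z}$-basis of $\mathbb{Z}[x_1,\dots,x_n]$.
   Context: A weak composition of length $n$ is a sequence $a=(a_1,\dots,a_n)$ of nonnegative integers; $|a|=\sum a_i$, and $\mathtt{flat}(a)$ is the sequence of nonzero entries of $a$ in order. A weak komposition is a weak composition in which each positive entry is colored either black or red (zero entries are uncolored); its excess $\mathrm{ex}(b)$ is the number of red entries. Let $a$ be a weak composition of length $n$ whose nonzero entries are exactly in positions $n_1<\dots<n_\ell$. A weak komposition $b$ of length $n$ is a glide of $a$ if there exist integers $0=i_0<i_1<\dots<i_\ell$ with $i_j\le n_j$ for all $j$, such that $b_k=0$ for all $k>i_\ell$, and for each $j=1,\dots,\ell$: (i) $b_{i_{j-1}+1}+\dots+b_{i_j}=\mathtt{flat}(a)_j+(\text{number of red entries among } b_{i_{j-1}+1},\dots,b_{i_j})$; (ii) the first nonzero entry among $b_{i_{j-1}+1},\dots,b_{i_j}$ is black. (Kompositions differing only in coloring are distinct glides.) With $\beta$ a formal parameter, the glide polynomial is $\mathcal{G}^{(\beta)}_a=\mathcal{G}^{(\beta)}_a(x_1,\dots,x_n)=\sum_{b}\beta^{\mathrm{ex}(b)}x_1^{b_1}\cdots x_n^{b_n}$,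 summed over all glides $b$ of $a$. *)

theory Defs
  imports Main
begin

text \<open>
Lists are 0-indexed; the paper's entry b_k (1-indexed) is b ! (k-1).
A weak composition of length n is a nat list of length n.
A weak komposition of length n is a list of pairs (value, red) of length n, where
the boolean flag red marks red entries; zero entries are uncolored, i.e. carry
the flag False.
\<close>

type_synonym komposition = "(nat \<times> bool) list"

definition is_komposition :: "nat \<Rightarrow> komposition \<Rightarrow> bool" where
  "is_komposition n b \<longleftrightarrow> length b = n \<and> (\<forall>p \<in> set b. fst p = 0 \<longrightarrow> \<not> snd p)"

definition flat :: "nat list \<Rightarrow> nat list" where
  "flat a = filter (\<lambda>x. x \<noteq> 0) a"

definition nz_pos :: "nat list \<Rightarrow> nat list" where
  "nz_pos a = filter (\<lambda>k. a ! k \<noteq> 0) [0..<length a]"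

definition ex :: "komposition \<Rightarrow> nat" where
  "ex b = length (filter snd b)"

text \<open>
The breakpoint list is = [i_0, ..., i_l] with i_0 = 0, strictly increasing,
i_j <= n_j (the paper's 1-based position of the j-th nonzero entry, i.e.
nz_pos a ! (j-1) + 1).  Block j consists of the 0-based indices [i_{j-1}, i_j),
i.e. the paper's entries b_{i_{j-1}+1}, ..., b_{i_j}.
\<close>
definition is_glide :: "nat list \<Rightarrow> komposition \<Rightarrow> bool" where
  "is_glide a b \<longleftrightarrow>
     is_komposition (length a) b \<and>
     (\<exists>is :: nat list.
        length is = length (flat a) + 1 \<and>
        is ! 0 = 0 \<and>
        (\<forall>j < length (flat a). is ! j < is ! (Suc j)) \<and>
        (\<forall>j \<in> {1..length (flat a)}. is ! j \<le> nz_pos a ! (j - 1) + 1) \<and>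
        (\<forall>k < length b. is ! length (flat a) \<le> k \<longrightarrow> fst (b ! k) = 0) \<and>
        (\<forall>j \<in> {1..length (flat a)}.
           (\<Sum>k \<in> {is ! (j - 1) ..< is ! j}. fst (b ! k))
             = flat a ! (j - 1) + card {k \<in> {is ! (j - 1) ..< is ! j}. snd (b ! k)} \<and>
           (\<forall>k \<in> {is ! (j - 1) ..< is ! j}.
              fst (b ! k) \<noteq> 0 \<and> (\<forall>k' \<in> {is ! (j - 1) ..< k}. fst (b ! k') = 0)
              \<longrightarrow> \<not> snd (b ! k))))"

text \<open>
Polynomials in Z[x_1,...,x_n][beta] are represented by their coefficient functions:
f (v, e) is the coefficient of x_1^(v!0) ... x_n^(v!(n-1)) * beta^e.
\<close>
definition polys_beta :: "nat \<Rightarrow> (nat list \<times> nat \<Rightarrow> int) set" where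
  "polys_beta n = {f. finite {m. f m \<noteq> 0} \<and> (\<forall>v e. f (v, e) \<noteq> 0 \<longrightarrow> length v = n)}"

definition polys :: "nat \<Rightarrow> (nat list \<Rightarrow> int) set" where
  "polys n = {f. finite {v. f v \<noteq> 0} \<and> (\<forall>v. f v \<noteq> 0 \<longrightarrow> length v = n)}"

definition glide_poly :: "nat list \<Rightarrow> nat list \<times> nat \<Rightarrow> int" where
  "glide_poly a = (\<lambda>(v, e). int (card {b. is_glide a b \<and> map fst b = v \<and> ex b = e}))"

definition beta_pow_mult :: "nat \<Rightarrow> (nat list \<times> nat \<Rightarrow> int) \<Rightarrow> nat list \<times> nat \<Rightarrow> int" where
  "beta_pow_mult k f = (\<lambda>(v, e). if k \<le> e then f (v, e - k) else 0)"

definition glide_poly_m1 :: "nat list \<Rightarrow> nat list \<Rightarrow> int" where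
  "glide_poly_m1 a = (\<lambda>v. \<Sum>b \<in> {b. is_glide a b \<and> map fst b = v}. (-1) ^ ex b)"

definition Z_basis :: "'i set \<Rightarrow> ('i \<Rightarrow> 'm \<Rightarrow> int) \<Rightarrow> ('m \<Rightarrow> int) set \<Rightarrow> bool" where
  "Z_basis I g M \<longleftrightarrow>
     (\<forall>i \<in> I. g i \<in> M) \<and>
     (\<forall>c :: 'i \<Rightarrow> int. finite {i. c i \<noteq> 0} \<and> {i. c i \<noteq> 0} \<subseteq> I \<and>
        (\<forall>m. (\<Sum>i \<in> {i. c i \<noteq> 0}. c i * g i m) = 0) \<longrightarrow> (\<forall>i. c i = 0)) \<and>
     (\<forall>f \<in> M. \<exists>c :: 'i \<Rightarrow> int. finite {i. c i \<noteq> 0} \<and> {i. c i \<noteq> 0} \<subseteq> I \<and>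
        f = (\<lambda>m. \<Sum>i \<in> {i. c i \<noteq> 0}. c i * g i m))"

end

theory Submission
  imports Defs
begin


lemma finite_min_rel:
  assumes "finite A" "A \<noteq> {}" "\<And>x. \<not> R x x" "\<And>x y z. R x y \<Longrightarrow> R y z \<Longrightarrow> R x z"
  shows "\<exists>x\<in>A. \<forall>y\<in>A. \<not> R y x"
  using assms(1,2)
proof (induction A rule: finite_ne_induct)
  case (singleton x) then show ?case using assms(3) by auto
next
  case (insert a A)
  then obtain x where x: "x \<in> A" "\<forall>y\<in>A. \<not> R y x" by auto
  show ?case
  proof (cases "R a x")
    case True
    then show ?thesis using x assms(3,4) by (metis insert_iff)
  next
    case False
    then show ?thesis using x by auto
  qed
qed

lemma sum_support_eq:
  fixes c :: "'i \<Rightarrow> int"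
  assumes "finite D" "{i. c i \<noteq> 0} \<subseteq> D"
  shows "(\<Sum>i\<in>{i. c i \<noteq> 0}. c i * g i m) = (\<Sum>i\<in>D. c i * g i m)"
  by (rule sum.mono_neutral_left) (use assms in auto)

lemma triangular_basis:
  fixes I :: "'i set" and g :: "'i \<Rightarrow> 'm \<Rightarrow> int" and S :: "'m set"
  assumes M: "M = {f. finite {m. f m \<noteq> 0} \<and> (\<forall>m. f m \<noteq> 0 \<longrightarrow> m \<in> S)}"
    and L: "bij_betw L I S"
    and lead: "\<And>i. i \<in> I \<Longrightarrow> g i (L i) = 1"
    and tri: "\<And>i m. i \<in> I \<Longrightarrow> g i m \<noteq> 0 \<Longrightarrow> m = L i \<or> R (L i) m"
    and gfin: "\<And>i. i \<in> I \<Longrightarrow> finite {m. g i m \<noteq> 0}"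
    and gS: "\<And>i m. i \<in> I \<Longrightarrow> g i m \<noteq> 0 \<Longrightarrow> m \<in> S"
    and irr: "\<And>x. \<not> R x x"
    and trans: "\<And>x y z. R x y \<Longrightarrow> R y z \<Longrightarrow> R x z"
    and RS: "\<And>x y. R x y \<Longrightarrow> x \<in> S \<Longrightarrow> y \<in> S"
    and Rfin: "\<And>x. x \<in> S \<Longrightarrow> finite {y. R x y}"
  shows "Z_basis I g M"
  unfolding Z_basis_def
proof (intro conjI ballI allI impI)
  fix i assume "i \<in> I" then show "g i \<in> M" using M gfin gS by auto
next
  fix c :: "'i \<Rightarrow> int" and j
  assume H: "finite {i. c i \<noteq> 0} \<and> {i. c i \<noteq> 0} \<subseteq> I \<and> (\<forall>m. (\<Sum>i\<in>{i. c i \<noteq> 0}. c i * g i m) = 0)"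
  define C where "C = {i. c i \<noteq> 0}"
  have fC: "finite C" and CI: "C \<subseteq> I" and Z: "\<And>m. (\<Sum>i\<in>C. c i * g i m) = 0"
    using H by (auto simp: C_def)
  show "c j = 0"
  proof (rule ccontr)
    assume "c j \<noteq> 0"
    then have "C \<noteq> {}" by (auto simp: C_def)
    then obtain m0 where m0: "m0 \<in> L ` C" "\<forall>y\<in>L ` C. \<not> R y m0"
      using finite_min_rel[of "L ` C" R] fC irr trans by blast
    then obtain i0 where i0: "i0 \<in> C" "m0 = L i0" by auto
    have inj: "inj_on L I" using L bij_betw_def by auto
    have "(\<Sum>i\<in>C. c i * g i m0) = c i0 * g i0 m0 + (\<Sum>i\<in>C - {i0}. c i * g i m0)"
      using fC i0 by (simp add: sum.remove)
    also have "(\<Sum>i\<in>C - {i0}. c i * g i m0) = 0"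
    proof (rule sum.neutral, rule ballI)
      fix i assume i: "i \<in> C - {i0}"
      show "c i * g i m0 = 0"
      proof (rule ccontr)
        assume "c i * g i m0 \<noteq> 0"
        then have "g i m0 \<noteq> 0" by auto
        then have "m0 = L i \<or> R (L i) m0" using tri i CI by auto
        moreover have "m0 \<noteq> L i" using inj i i0 CI by (metis DiffE inj_onD singletonI subsetD)
        moreover have "\<not> R (L i) m0" using m0 i by auto
        ultimately show False by auto
      qed
    qed
    finally have "c i0 = 0" using Z[of m0] lead i0 CI by auto
    then show False using i0 by (auto simp: C_def)
  qed
next
  fix f assume fM: "f \<in> M"
  let ?P = "\<lambda>f. \<exists>c :: 'i \<Rightarrow> int. finite {i. c i \<noteq> 0} \<and> {i. c i \<noteq> 0} \<subseteq> I \<and>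
        f = (\<lambda>m. \<Sum>i \<in> {i. c i \<noteq> 0}. c i * g i m)"
  have main: "finite U \<Longrightarrow> U \<subseteq> S \<Longrightarrow> (\<forall>x\<in>U. \<forall>y. R x y \<longrightarrow> y \<in> U) \<Longrightarrow>
      (\<forall>m. f m \<noteq> 0 \<longrightarrow> m \<in> U) \<Longrightarrow> ?P f" for U f
  proof (induction "card U" arbitrary: U f rule: less_induct)
    case less
    show ?case
    proof (cases "U = {}")
      case True
      then have "f = (\<lambda>m. 0)" using less.prems by auto
      then show ?thesis by (intro exI[of _ "\<lambda>_. 0"]) auto
    next
      case False
      then obtain m0 where m0: "m0 \<in> U" "\<forall>y\<in>U. \<not> R y m0"
        using finite_min_rel[of U R] less.prems irr trans by blast
      have m0S: "m0 \<in> S" using m0 less.prems by auto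
      define i0 where "i0 = inv_into I L m0"
      have i0I: "i0 \<in> I" and Li0: "L i0 = m0"
        using L m0S unfolding i0_def bij_betw_def by (auto intro: inv_into_into f_inv_into_f)
      define f' where "f' = (\<lambda>m. f m - f m0 * g i0 m)"
      define U' where "U' = U - {m0}"
      have "card U' < card U" using m0 less.prems card_gt_0_iff[of U] by (auto simp: U'_def)
      moreover have "finite U'" "U' \<subseteq> S" using less.prems by (auto simp: U'_def)
      moreover have "\<forall>x\<in>U'. \<forall>y. R x y \<longrightarrow> y \<in> U'"
        using less.prems(3) m0 by (auto simp: U'_def)
      moreover have "\<forall>m. f' m \<noteq> 0 \<longrightarrow> m \<in> U'"
      proof (intro allI impI)
        fix m assume "f' m \<noteq> 0"
        show "m \<in> U'"
        proof (cases "m = m0")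
          case True
          then have "f' m = 0" using lead[OF i0I] Li0 by (simp add: f'_def)
          then show ?thesis using \<open>f' m \<noteq> 0\<close> by simp
        next
          case False
          then have "f m \<noteq> 0 \<or> g i0 m \<noteq> 0" using \<open>f' m \<noteq> 0\<close> by (auto simp: f'_def)
          then have "m \<in> U"
          proof
            assume "g i0 m \<noteq> 0"
            then have "R m0 m" using tri[OF i0I] Li0 False by auto
            then show ?thesis using less.prems(3) m0 by auto
          qed (use less.prems in auto)
          then show ?thesis using False by (auto simp: U'_def)
        qed
      qed
      ultimately obtain c where c: "finite {i. c i \<noteq> 0}" "{i. c i \<noteq> 0} \<subseteq> I"
        "f' = (\<lambda>m. \<Sum>i \<in> {i. c i \<noteq> 0}. c i * g i m)"
        using less.hyps by blast
      define c' where "c' = c(i0 := c i0 + f m0)"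
      define D where "D = {i. c i \<noteq> 0} \<union> {i0}"
      have fD: "finite D" using c by (auto simp: D_def)
      have c'D: "{i. c' i \<noteq> 0} \<subseteq> D" by (auto simp: D_def c'_def)
      show ?thesis
      proof (intro exI conjI)
        show "finite {i. c' i \<noteq> 0}" using fD c'D finite_subset by blast
        show "{i. c' i \<noteq> 0} \<subseteq> I" using c'D c i0I by (auto simp: D_def)
        show "f = (\<lambda>m. \<Sum>i\<in>{i. c' i \<noteq> 0}. c' i * g i m)"
        proof
          fix m
          have "(\<Sum>i\<in>{i. c' i \<noteq> 0}. c' i * g i m) = (\<Sum>i\<in>D. c' i * g i m)"
            by (rule sum_support_eq[OF fD c'D])
          also have "\<dots> = (\<Sum>i\<in>D. c i * g i m) + f m0 * g i0 m"
          proof -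
            have "(\<Sum>i\<in>D. c' i * g i m) = c' i0 * g i0 m + (\<Sum>i\<in>D - {i0}. c' i * g i m)"
              using fD by (intro sum.remove) (auto simp: D_def)
            moreover have "(\<Sum>i\<in>D. c i * g i m) = c i0 * g i0 m + (\<Sum>i\<in>D - {i0}. c i * g i m)"
              using fD by (intro sum.remove) (auto simp: D_def)
            moreover have "(\<Sum>i\<in>D - {i0}. c' i * g i m) = (\<Sum>i\<in>D - {i0}. c i * g i m)"
              by (rule sum.cong) (auto simp: c'_def)
            ultimately show ?thesis by (simp add: c'_def algebra_simps)
          qed
          also have "(\<Sum>i\<in>D. c i * g i m) = f' m"
            using sum_support_eq[OF fD, of c g m] c(3) by (simp add: D_def subset_insertI)
          finally show "f m = (\<Sum>i\<in>{i. c' i \<noteq> 0}. c' i * g i m)" by (simp add: f'_def)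
        qed
      qed
    qed
  qed
  define F where "F = {m. f m \<noteq> 0}"
  define U where "U = F \<union> (\<Union>x\<in>F. {y. R x y})"
  have FS: "F \<subseteq> S" "finite F" using fM M by (auto simp: F_def)
  show "?P f"
  proof (rule main[of U])
    show "finite U" using FS Rfin by (auto simp: U_def)
    show "U \<subseteq> S" using FS RS by (auto simp: U_def)
    show "\<forall>x\<in>U. \<forall>y. R x y \<longrightarrow> y \<in> U" using trans by (auto simp: U_def)
    show "\<forall>m. f m \<noteq> 0 \<longrightarrow> m \<in> U" by (auto simp: U_def F_def)
  qed
qed




lemma filter_conv_map_nth:
  "filter p xs = map (nth xs) (filter (\<lambda>k. p (xs ! k)) [0..<length xs])"
proof -
  have "filter p xs = filter p (map (nth xs) [0..<length xs])" by (simp add: map_nth)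
  also have "\<dots> = map (nth xs) (filter (\<lambda>k. p (xs ! k)) [0..<length xs])"
    by (simp add: filter_map comp_def)
  finally show ?thesis .
qed

lemma flat_conv: "flat a = map (nth a) (nz_pos a)"
  unfolding flat_def nz_pos_def by (rule filter_conv_map_nth)

lemma length_nz: "length (nz_pos a) = length (flat a)"
  by (simp add: flat_conv)

lemma set_nz: "set (nz_pos a) = {k. k < length a \<and> a ! k \<noteq> 0}"
  unfolding nz_pos_def by auto

lemma nz_lt: "j < length (flat a) \<Longrightarrow> nz_pos a ! j < length a"
  using set_nz[of a] length_nz[of a] by (metis (no_types, lifting) mem_Collect_eq nth_mem)

lemma flat_nth: "j < length (flat a) \<Longrightarrow> flat a ! j = a ! (nz_pos a ! j)"
  by (simp add: flat_conv)

lemma flat_pos: "j < length (flat a) \<Longrightarrow> flat a ! j > 0"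
  using nth_mem[of j "flat a"] by (auto simp: flat_def)

lemma distinct_nz: "distinct (nz_pos a)"
  unfolding nz_pos_def by simp

lemma sorted_nz: "i < j \<Longrightarrow> j < length (flat a) \<Longrightarrow> nz_pos a ! i < nz_pos a ! j"
proof -
  assume "i < j" "j < length (flat a)"
  have "sorted_wrt (<) (nz_pos a)" unfolding nz_pos_def
    by (rule sorted_wrt_filter) simp
  then show ?thesis using \<open>i < j\<close> \<open>j < length (flat a)\<close> length_nz[of a]
    by (simp add: sorted_wrt_iff_nth_less)
qed

lemma sorted_nz_rev: "nz_pos a ! i < nz_pos a ! j \<Longrightarrow> i < length (flat a) \<Longrightarrow> j < length (flat a) \<Longrightarrow> i < j"
  using sorted_nz[of j i a] by (metis linorder_neqE_nat not_less_iff_gr_or_eq)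

lemma sum_list_flat: "sum_list (flat a) = sum_list a"
  unfolding flat_def by (induction a) auto

lemma in_nz: "k < length a \<Longrightarrow> a ! k \<noteq> 0 \<Longrightarrow> \<exists>j < length (flat a). nz_pos a ! j = k"
  using set_nz[of a] length_nz[of a] by (metis (mono_tags, lifting) in_set_conv_nth mem_Collect_eq)

definition W :: "nat list \<Rightarrow> nat" where
  "W v = (\<Sum>k = 0..<length v. v ! k * (length v - k))"

lemma W_a: "W a = (\<Sum>j<length (flat a). flat a ! j * (length a - nz_pos a ! j))"
proof -
  let ?h = "\<lambda>k. a ! k * (length a - k)"
  have "W a = (\<Sum>k\<in>set (nz_pos a). ?h k)"
    unfolding W_def by (rule sum.mono_neutral_right) (auto simp: set_nz)
  also have "\<dots> = sum_list (map ?h (nz_pos a))" by (simp add: sum.distinct_set_conv_list distinct_nz)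
  also have "\<dots> = (\<Sum>j<length (flat a). ?h (nz_pos a ! j))"
    by (simp add: sum_list_sum_nth length_nz atLeast0LessThan)
  also have "\<dots> = (\<Sum>j<length (flat a). flat a ! j * (length a - nz_pos a ! j))"
    by (rule sum.cong) (auto simp: flat_nth)
  finally show ?thesis .
qed

lemma block_sum:
  fixes h :: "nat \<Rightarrow> 'b::comm_monoid_add" and t :: "nat list"
  assumes "t ! 0 = 0" "\<forall>j<m. t ! j \<le> t ! Suc j"
  shows "(\<Sum>k\<in>{0..<t ! m}. h k) = (\<Sum>j<m. \<Sum>k\<in>{t ! j..<t ! Suc j}. h k)"
  using assms(2)
proof (induction m)
  case 0 then show ?case using assms(1) by simp
next
  case (Suc m)
  then have "(\<Sum>k\<in>{0..<t ! m}. h k) = (\<Sum>j<m. \<Sum>k\<in>{t ! j..<t ! Suc j}. h k)" by auto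
  moreover have "(\<Sum>k\<in>{0..<t ! m}. h k) + (\<Sum>k\<in>{t ! m..<t ! Suc m}. h k) = (\<Sum>k\<in>{0..<t ! Suc m}. h k)"
    using Suc.prems by (intro sum.atLeastLessThan_concat) auto
  ultimately show ?case by simp
qed

lemma find_block:
  fixes t :: "nat list"
  assumes "t ! 0 = 0" "k < t ! m"
  shows "\<exists>j<m. t ! j \<le> k \<and> k < t ! Suc j"
  using assms(2)
proof (induction m)
  case 0 then show ?case using assms(1) by simp
next
  case (Suc m)
  show ?case
  proof (cases "k < t ! m")
    case True then show ?thesis using Suc.IH by (meson less_SucI)
  next
    case False then show ?thesis using Suc.prems by (intro exI[of _ m]) auto
  qed
qed

lemma card_sum: "finite A \<Longrightarrow> card {k \<in> A. p k} = (\<Sum>k\<in>A. if p k then 1 else 0)"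
  by (simp add: sum.inter_filter[symmetric])




lemma mono_chain:
  fixes t :: "nat list"
  assumes "\<forall>j<m. t ! j \<le> t ! Suc j" "i \<le> j" "j \<le> m"
  shows "t ! i \<le> t ! j"
  using assms(2,3)
proof (induction j)
  case 0 then show ?case by simp
next
  case (Suc j)
  show ?case
  proof (cases "i = Suc j")
    case False
    then have "t ! i \<le> t ! j" using Suc by auto
    also have "\<dots> \<le> t ! Suc j" using assms(1) Suc.prems by auto
    finally show ?thesis .
  qed simp
qed

lemma glide_props:
  assumes g: "is_glide a b"
  defines "n \<equiv> length a" and "v \<equiv> map fst b"
  shows "length b = n \<and> sum_list v = sum_list a + ex b \<and> length (flat a) + ex b \<le> length (flat v)
    \<and> W a \<le> W v \<and> (ex b = 0 \<longrightarrow> W v = W a \<longrightarrow> v = a)"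
proof -
  define l where "l = length (flat a)"
  define P where "P = nz_pos a"
  define F where "F = flat a"
  define x where "x = (\<lambda>k. fst (b ! k))"
  define red where "red = (\<lambda>k. snd (b ! k))"
  have komp: "length b = n" "\<forall>p\<in>set b. fst p = 0 \<longrightarrow> \<not> snd p"
    using g by (auto simp: is_glide_def is_komposition_def n_def)
  obtain t :: "nat list" where t: "length t = l + 1" "t ! 0 = 0"
    "\<forall>j < l. t ! j < t ! (Suc j)"
    "\<forall>j \<in> {1..l}. t ! j \<le> P ! (j - 1) + 1"
    "\<forall>k < length b. t ! l \<le> k \<longrightarrow> x k = 0"
    "\<forall>j \<in> {1..l}. (\<Sum>k \<in> {t ! (j - 1) ..< t ! j}. x k) = F ! (j - 1) + card {k \<in> {t ! (j - 1) ..< t ! j}. red k} \<and>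
           (\<forall>k \<in> {t ! (j - 1) ..< t ! j}. x k \<noteq> 0 \<and> (\<forall>k' \<in> {t ! (j - 1) ..< k}. x k' = 0) \<longrightarrow> \<not> red k)"
    using g unfolding is_glide_def l_def P_def F_def x_def red_def by blast
  have mono: "\<forall>j<l. t ! j \<le> t ! Suc j" using t(3) by auto
  have bnd: "t ! Suc j \<le> P ! j + 1" if "j < l" for j
    using bspec[OF t(4), of "Suc j"] that by auto
  have bsum: "(\<Sum>k \<in> {t ! j ..< t ! Suc j}. x k) = F ! j + card {k \<in> {t ! j ..< t ! Suc j}. red k}"
    if "j < l" for j
    using bspec[OF t(6), of "Suc j"] that by auto
  have bfirst: "\<not> red k" if "j < l" "k \<in> {t ! j ..< t ! Suc j}" "x k \<noteq> 0"
      "\<forall>k' \<in> {t ! j ..< k}. x k' = 0" for j k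
    using bspec[OF t(6), of "Suc j"] that by auto
  have Pn: "P ! j < n" if "j < l" for j using nz_lt[of j a] that by (simp add: l_def P_def n_def)
  have tl: "t ! l \<le> n"
  proof (cases l)
    case 0 then show ?thesis using t(2) by simp
  next
    case (Suc m)
    then show ?thesis using bnd[of m] Pn[of m] by simp
  qed
  have tj_le: "t ! j \<le> t ! l" if "j \<le> l" for j using mono_chain[OF mono, of j l] that by simp
  have redx: "x k \<noteq> 0" if "k < n" "red k" for k
    using komp that nth_mem[of k b] by (auto simp: x_def red_def)
  have full: "(\<Sum>k\<in>{0..<n}. h k) = (\<Sum>j<l. \<Sum>k\<in>{t ! j..<t ! Suc j}. h k)"
    if "\<And>k. t ! l \<le> k \<Longrightarrow> k < n \<Longrightarrow> h k = 0" for h :: "nat \<Rightarrow> nat"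
  proof -
    have "(\<Sum>k\<in>{0..<n}. h k) = (\<Sum>k\<in>{0..<t ! l}. h k) + (\<Sum>k\<in>{t ! l..<n}. h k)"
      using tl by (simp add: sum.atLeastLessThan_concat)
    also have "(\<Sum>k\<in>{t ! l..<n}. h k) = 0" using that by simp
    finally show ?thesis using block_sum[of t l h] t(2) mono by simp
  qed
  define rc where "rc = (\<lambda>j. card {k \<in> {t ! j ..< t ! Suc j}. red k})"
  have exb: "ex b = (\<Sum>j<l. rc j)"
  proof -
    have "ex b = card {k \<in> {0..<n}. red k}"
      unfolding ex_def length_filter_conv_card komp(1)[symmetric] red_def
      by (rule arg_cong[where f=card]) auto
    also have "\<dots> = (\<Sum>k\<in>{0..<n}. if red k then 1 else 0)" by (rule card_sum) simp
    also have "\<dots> = (\<Sum>j<l. \<Sum>k\<in>{t ! j..<t ! Suc j}. if red k then 1 else 0)"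
      by (rule full) (use t(5) komp redx in fastforce)
    also have "\<dots> = (\<Sum>j<l. rc j)" unfolding rc_def by (rule sum.cong[OF refl], rule card_sum[symmetric]) simp
    finally show ?thesis .
  qed
  have vlen: "length v = n" using komp by (simp add: v_def)
  have vx: "v ! k = x k" if "k < n" for k using that komp by (simp add: v_def x_def)
  have G2: "sum_list v = sum_list a + ex b"
  proof -
    have "sum_list v = (\<Sum>k\<in>{0..<n}. x k)" by (simp add: sum_list_sum_nth vlen vx)
    also have "\<dots> = (\<Sum>j<l. \<Sum>k\<in>{t ! j..<t ! Suc j}. x k)"
      by (rule full) (use t(5) komp in auto)
    also have "\<dots> = (\<Sum>j<l. F ! j + rc j)" by (rule sum.cong) (auto simp: bsum rc_def)
    also have "\<dots> = (\<Sum>j<l. F ! j) + ex b" by (simp add: sum.distrib exb)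
    also have "(\<Sum>j<l. F ! j) = sum_list a"
      using sum_list_sum_nth[of "flat a"] sum_list_flat[of a] by (simp add: F_def l_def atLeast0LessThan)
    finally show ?thesis .
  qed
  have G3: "l + ex b \<le> length (flat v)"
  proof -
    have blk: "rc j + 1 \<le> card {k \<in> {t ! j ..< t ! Suc j}. x k \<noteq> 0}" if j: "j < l" for j
    proof -
      define B where "B = {t ! j ..< t ! Suc j}"
      define N where "N = {k \<in> B. x k \<noteq> 0}"
      have Bn: "k < n" if "k \<in> B" for k using that tj_le[of "Suc j"] j tl by (auto simp: B_def)
      have "N \<noteq> {}"
      proof
        assume "N = {}"
        then have "(\<Sum>k\<in>B. x k) = 0" by (auto simp: N_def)
        moreover have "F ! j > 0" using flat_pos[of j a] j by (simp add: F_def l_def)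
        ultimately show False using bsum[OF j] by (simp add: B_def)
      qed
      have fN: "finite N" by (simp add: N_def B_def)
      define k0 where "k0 = Min N"
      have k0N: "k0 \<in> N" using fN \<open>N \<noteq> {}\<close> by (simp add: k0_def)
      have "\<forall>k'\<in>{t ! j..<k0}. x k' = 0"
      proof
        fix k' assume k': "k' \<in> {t ! j..<k0}"
        then have "k' \<in> B" using k0N by (auto simp: N_def B_def)
        moreover have "k' \<notin> N"
        proof
          assume "k' \<in> N"
          then have "k0 \<le> k'" using Min_le[OF fN] by (simp add: k0_def)
          then show False using k' by simp
        qed
        ultimately show "x k' = 0" by (auto simp: N_def)
      qed
      then have "\<not> red k0" using bfirst[OF j, of k0] k0N by (auto simp: N_def B_def)
      have "insert k0 {k \<in> B. red k} \<subseteq> N" using k0N redx Bn by (auto simp: N_def)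
      then have "card (insert k0 {k \<in> B. red k}) \<le> card N" using fN by (rule card_mono[rotated])
      moreover have "card (insert k0 {k \<in> B. red k}) = rc j + 1"
        using \<open>\<not> red k0\<close> by (simp add: rc_def B_def)
      ultimately show ?thesis by (simp add: N_def B_def)
    qed
    have "length (flat v) = card {k \<in> {0..<n}. x k \<noteq> 0}"
      unfolding flat_def length_filter_conv_card vlen
      by (rule arg_cong[where f=card]) (auto simp: vx)
    also have "\<dots> = (\<Sum>k\<in>{0..<n}. if x k \<noteq> 0 then 1 else 0)" by (rule card_sum) simp
    also have "\<dots> = (\<Sum>j<l. \<Sum>k\<in>{t ! j..<t ! Suc j}. if x k \<noteq> 0 then 1 else 0)"
      by (rule full) (use t(5) komp in auto)
    also have "\<dots> = (\<Sum>j<l. card {k \<in> {t ! j ..< t ! Suc j}. x k \<noteq> 0})" by (rule sum.cong[OF refl], rule card_sum[symmetric]) simp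
    also have "\<dots> \<ge> (\<Sum>j<l. rc j + 1)" by (rule sum_mono) (use blk in auto)
    finally show ?thesis by (simp add: sum.distrib exb sum_Suc)
  qed
  define X where "X = (\<lambda>j. \<Sum>k\<in>{t ! j..<t ! Suc j}. x k * (n - k))"
  define Y where "Y = (\<lambda>j. F ! j * (n - P ! j))"
  have blkW: "(\<Sum>k\<in>{t ! j..<t ! Suc j}. x k * (n - P ! j)) \<le> X j" if j: "j < l" for j
    unfolding X_def
  proof (rule sum_mono)
    fix k assume "k \<in> {t ! j..<t ! Suc j}"
    then have "k \<le> P ! j" using bnd[OF j] by auto
    then show "x k * (n - P ! j) \<le> x k * (n - k)" by (simp add: diff_le_mono2)
  qed
  have blkW2: "(\<Sum>k\<in>{t ! j..<t ! Suc j}. x k * (n - P ! j)) = (F ! j + rc j) * (n - P ! j)"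
    if j: "j < l" for j
    using bsum[OF j] by (simp add: sum_distrib_right[symmetric] rc_def)
  have XY: "Y j \<le> X j" if j: "j < l" for j
    using blkW[OF j] blkW2[OF j] unfolding Y_def by (metis add_mult_distrib le_add1 le_trans)
  have Wv: "W v = (\<Sum>j<l. X j)"
  proof -
    have "W v = (\<Sum>k\<in>{0..<n}. x k * (n - k))" unfolding W_def vlen by (rule sum.cong) (auto simp: vx)
    also have "\<dots> = (\<Sum>j<l. X j)" unfolding X_def by (rule full) (use t(5) komp in auto)
    finally show ?thesis .
  qed
  have Wa: "W a = (\<Sum>j<l. Y j)" unfolding Y_def W_a by (simp add: l_def F_def P_def n_def)
  have G4: "W a \<le> W v" unfolding Wv Wa by (rule sum_mono) (use XY in auto)
  have G5: "v = a" if ex0: "ex b = 0" and Weq: "W v = W a"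
  proof -
    have rc0: "rc j = 0" if "j < l" for j using ex0 exb that by simp
    have XYeq: "X j = Y j" if j: "j < l" for j
      using sum_mono_inv[of Y "{..<l}" X j] Wv Wa Weq XY j by auto
    have xz: "x k = 0" if j: "j < l" and k: "k \<in> {t ! j..<t ! Suc j}" "k < P ! j" for j k
    proof -
      have eq: "(\<Sum>k\<in>{t ! j..<t ! Suc j}. x k * (n - k)) = (\<Sum>k\<in>{t ! j..<t ! Suc j}. x k * (n - P ! j))"
        using XYeq[OF j] blkW2[OF j] rc0[OF j] by (simp add: X_def Y_def)
      have "x k * (n - k) = x k * (n - P ! j)"
      proof (rule sum_mono_inv[OF eq[symmetric], of k, symmetric])
        fix i assume "i \<in> {t ! j..<t ! Suc j}"
        then have "i \<le> P ! j" using bnd[OF j] by auto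
        then show "x i * (n - P ! j) \<le> x i * (n - i)" by (simp add: diff_le_mono2)
      qed (use k in auto)
      moreover have "n - P ! j < n - k" using k Pn[OF j] by auto
      ultimately show ?thesis by auto
    qed
    have Pin: "P ! j \<in> {t ! j..<t ! Suc j}" if j: "j < l" for j
    proof (rule ccontr)
      assume nin: "P ! j \<notin> {t ! j..<t ! Suc j}"
      have "t ! j \<le> P ! j" using t(3) bnd[OF j] j by force
      then have lt: "\<forall>k\<in>{t ! j..<t ! Suc j}. k < P ! j" using nin by auto
      have "(\<Sum>k\<in>{t ! j..<t ! Suc j}. x k) = 0"
        using xz[OF j] lt by (intro sum.neutral) auto
      moreover have "F ! j > 0" using flat_pos[of j a] j by (simp add: F_def l_def)
      ultimately show False using bsum[OF j] by simp
    qed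
    have xP: "x (P ! j) = F ! j" if j: "j < l" for j
    proof -
      have "(\<Sum>k\<in>{t ! j..<t ! Suc j}. x k) = x (P ! j) + (\<Sum>k\<in>{t ! j..<t ! Suc j} - {P ! j}. x k)"
        using Pin[OF j] by (simp add: sum.remove)
      also have "(\<Sum>k\<in>{t ! j..<t ! Suc j} - {P ! j}. x k) = 0"
      proof (rule sum.neutral, rule ballI)
        fix k assume k: "k \<in> {t ! j..<t ! Suc j} - {P ! j}"
        then have "k < P ! j" using bnd[OF j] by auto
        then show "x k = 0" using xz[OF j] k by auto
      qed
      finally have "(\<Sum>k\<in>{t ! j..<t ! Suc j}. x k) = x (P ! j)" by simp
      then show ?thesis using bsum[OF j] rc0[OF j] unfolding rc_def by linarith
    qed
    show ?thesis
    proof (rule nth_equalityI)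
      show "length v = length a" using vlen by (simp add: n_def)
      fix k assume "k < length v"
      then have kn: "k < n" using vlen by simp
      show "v ! k = a ! k"
      proof (cases "a ! k = 0")
        case False
        then obtain j where j: "j < l" "P ! j = k" using in_nz[of k a] kn
          by (auto simp: n_def l_def P_def)
        then show ?thesis using xP[OF j(1)] vx[OF kn] flat_nth[of j a] by (simp add: F_def P_def l_def)
      next
        case True
        show ?thesis
        proof (cases "t ! l \<le> k")
          case True
          then show ?thesis using t(5) komp kn vx \<open>a ! k = 0\<close> by auto
        next
          case False
          then obtain j where j: "j < l" "t ! j \<le> k" "k < t ! Suc j"
            using find_block[of t k l] t(2) by auto
          have "k \<noteq> P ! j"
            using \<open>a ! k = 0\<close> flat_pos[of j a] flat_nth[of j a] j by (auto simp: P_def l_def)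
          then have "k < P ! j" using bnd[OF j(1)] j by auto
          then show ?thesis using xz[OF j(1)] j vx[OF kn] \<open>a ! k = 0\<close> by auto
        qed
      qed
    qed
  qed
  show ?thesis using komp(1) G2 G3 G4 G5 by (simp add: l_def)
qed




lemma block_self:
  assumes j: "j < length (flat a)"
  defines "t \<equiv> 0 # map Suc (nz_pos a)"
  shows "t ! j \<le> nz_pos a ! j" "(\<Sum>k\<in>{t ! j..<Suc (nz_pos a ! j)}. a ! k) = flat a ! j"
proof -
  let ?P = "nz_pos a" and ?l = "length (flat a)"
  show tj: "t ! j \<le> ?P ! j"
  proof (cases j)
    case (Suc i)
    then show ?thesis using sorted_nz[of i j a] j by (simp add: t_def length_nz)
  qed (simp add: t_def)
  have "(\<Sum>k\<in>{t ! j..<Suc (?P ! j)}. a ! k) = a ! (?P ! j) + (\<Sum>k\<in>{t ! j..<Suc (?P ! j)} - {?P ! j}. a ! k)"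
    using tj by (intro sum.remove) auto
  also have "(\<Sum>k\<in>{t ! j..<Suc (?P ! j)} - {?P ! j}. a ! k) = 0"
  proof (rule sum.neutral, rule ballI, rule ccontr)
    fix k assume k: "k \<in> {t ! j..<Suc (?P ! j)} - {?P ! j}" and nz: "a ! k \<noteq> 0"
    have kn: "k < length a" using k nz_lt[OF j] by auto
    obtain i where i: "i < ?l" "?P ! i = k" using in_nz[OF kn nz] by auto
    have "i < j" using sorted_nz_rev[of a i j] i j k by auto
    then obtain j' where j': "j = Suc j'" by (cases j) auto
    have "t ! j = Suc (?P ! j')" using j' j by (simp add: t_def length_nz)
    then have "?P ! j' < ?P ! i" using k i by auto
    then have "j' < i" using sorted_nz_rev[of a j' i] i j j' by auto
    then show False using \<open>i < j\<close> j' by simp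
  qed
  finally show "(\<Sum>k\<in>{t ! j..<Suc (?P ! j)}. a ! k) = flat a ! j" using flat_nth[OF j] by simp
qed

lemma glide_self: "is_glide a (map (\<lambda>x. (x, False)) a)"
proof -
  let ?b = "map (\<lambda>x. (x, False)) a" and ?P = "nz_pos a" and ?l = "length (flat a)"
  define t where "t = 0 # map Suc (nz_pos a)"
  have tS: "t ! Suc j = Suc (?P ! j)" if "j < ?l" for j using that by (simp add: t_def length_nz)
  have kom: "is_komposition (length a) ?b" by (auto simp: is_komposition_def)
  have h1: "length t = ?l + 1" by (simp add: t_def length_nz)
  have h2: "t ! 0 = 0" by (simp add: t_def)
  have h3: "\<forall>j < ?l. t ! j < t ! Suc j"
  proof (intro allI impI)
    fix j assume j: "j < ?l"
    show "t ! j < t ! Suc j" using block_self(1)[OF j] tS[OF j] by (simp add: t_def)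
  qed
  have h4: "\<forall>j\<in>{1..?l}. t ! j \<le> ?P ! (j - 1) + 1"
  proof
    fix j assume "j \<in> {1..?l}"
    then obtain i where i: "j = Suc i" "i < ?l" by (cases j) auto
    show "t ! j \<le> ?P ! (j - 1) + 1" using tS[OF i(2)] i by simp
  qed
  have h5: "\<forall>k < length ?b. t ! ?l \<le> k \<longrightarrow> fst (?b ! k) = 0"
  proof (intro allI impI)
    fix k assume k: "k < length ?b" "t ! ?l \<le> k"
    show "fst (?b ! k) = 0"
    proof (rule ccontr)
      assume "fst (?b ! k) \<noteq> 0"
      then have nz: "a ! k \<noteq> 0" using k by simp
      obtain i where i: "i < ?l" "?P ! i = k" using in_nz[OF _ nz] k by auto
      then obtain m where m: "?l = Suc m" by (cases ?l) auto
      have "t ! ?l = Suc (?P ! m)" using tS[of m] m by simp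
      then have "?P ! m < ?P ! i" using k i by simp
      then have "m < i" using sorted_nz_rev[of a m i] i m by auto
      then show False using i m by simp
    qed
  qed
  have h6: "\<forall>j\<in>{1..?l}. (\<Sum>k\<in>{t ! (j - 1)..<t ! j}. fst (?b ! k)) = flat a ! (j - 1) + card {k \<in> {t ! (j - 1)..<t ! j}. snd (?b ! k)} \<and>
         (\<forall>k\<in>{t ! (j - 1)..<t ! j}. fst (?b ! k) \<noteq> 0 \<and> (\<forall>k'\<in>{t ! (j - 1)..<k}. fst (?b ! k') = 0) \<longrightarrow> \<not> snd (?b ! k))"
  proof
    fix j assume "j \<in> {1..?l}"
    then obtain i where i: "j = Suc i" "i < ?l" by (cases j) auto
    have kn: "k < length a" if "k \<in> {t ! i..<t ! Suc i}" for k
      using that tS[OF i(2)] nz_lt[OF i(2)] by auto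
    have "(\<Sum>k\<in>{t ! i..<t ! Suc i}. fst (?b ! k)) = (\<Sum>k\<in>{t ! i..<t ! Suc i}. a ! k)"
      by (rule sum.cong) (auto simp: kn)
    also have "\<dots> = flat a ! i" using block_self(2)[OF i(2)] tS[OF i(2)] by (simp add: t_def)
    finally have "(\<Sum>k\<in>{t ! i..<t ! Suc i}. fst (?b ! k)) = flat a ! i
          + card {k \<in> {t ! i ..< t ! Suc i}. snd (?b ! k)}"
      using kn by simp
    moreover have "\<forall>k\<in>{t ! i..<t ! Suc i}. fst (?b ! k) \<noteq> 0 \<and> (\<forall>k'\<in>{t ! i..<k}. fst (?b ! k') = 0) \<longrightarrow> \<not> snd (?b ! k)"
      using kn by simp
    ultimately show "(\<Sum>k\<in>{t ! (j - 1)..<t ! j}. fst (?b ! k)) = flat a ! (j - 1) + card {k \<in> {t ! (j - 1)..<t ! j}. snd (?b ! k)} \<and>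
         (\<forall>k\<in>{t ! (j - 1)..<t ! j}. fst (?b ! k) \<noteq> 0 \<and> (\<forall>k'\<in>{t ! (j - 1)..<k}. fst (?b ! k') = 0) \<longrightarrow> \<not> snd (?b ! k))"
      using i by simp
  qed
  show ?thesis unfolding is_glide_def using kom h1 h2 h3 h4 h5 h6 by blast
qed

lemma glide_unique:
  assumes "is_glide a b" "map fst b = a" "ex b = 0"
  shows "b = map (\<lambda>x. (x, False)) a"
proof -
  have "filter snd b = []" using assms(3) by (simp add: ex_def)
  then have ns: "\<forall>p\<in>set b. \<not> snd p" by (simp add: filter_empty_conv)
  show ?thesis
  proof (rule nth_equalityI)
    show "length b = length (map (\<lambda>x. (x, False)) a)" using assms(2) by auto
    fix k assume "k < length b"
    then show "b ! k = map (\<lambda>x. (x, False)) a ! k"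
      using assms(2) ns nth_mem[of k b] by (cases "b ! k") auto
  qed
qed

lemma glides_finite: "finite {b. is_glide a b}"
proof -
  let ?A = "{0..sum_list a + length a} \<times> (UNIV :: bool set)"
  have "{b. is_glide a b} \<subseteq> {b. set b \<subseteq> ?A \<and> length b = length a}"
  proof
    fix b assume "b \<in> {b. is_glide a b}"
    then have g: "is_glide a b" by simp
    have props: "length b = length a" "sum_list (map fst b) = sum_list a + ex b"
      using glide_props[OF g] by auto
    have "ex b \<le> length b" by (simp add: ex_def)
    have "(p, q) \<in> ?A" if pq: "(p, q) \<in> set b" for p q
    proof -
      have "p \<in> set (map fst b)" using pq by force
      then have "p \<le> sum_list (map fst b)" using member_le_sum_list[of p "map fst b"] by simp
      then show ?thesis using props \<open>ex b \<le> length b\<close> by auto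
    qed
    then show "b \<in> {b. set b \<subseteq> ?A \<and> length b = length a}" using props by auto
  qed
  moreover have "finite {b. set b \<subseteq> ?A \<and> length b = length a}"
    by (rule finite_lists_length_eq) simp
  ultimately show ?thesis by (rule finite_subset)
qed

lemma glides_self_set: "{b. is_glide a b \<and> map fst b = a \<and> ex b = 0} = {map (\<lambda>x. (x, False)) a}"
  using glide_unique glide_self by (auto simp: ex_def comp_def)




lemma card_glides_ne: "card {b. is_glide a b \<and> P b} \<noteq> 0 \<Longrightarrow> \<exists>b. is_glide a b \<and> P b"
  by (metis (no_types, lifting) card.empty empty_Collect_eq)

lemma part1:
  "Z_basis {(k, a). length a = n} (\<lambda>(k, a). beta_pow_mult k (glide_poly a)) (polys_beta n)"
proof -
  define R where "R = (\<lambda>(v::nat list, e::nat) (w::nat list, f::nat). length w = length v \<and> e \<le> f \<and>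
     sum_list w + e = sum_list v + f \<and> length (flat v) + f \<le> length (flat w) + e \<and>
     (e < f \<or> (e = f \<and> W v < W w)))"
  let ?S = "{(v::nat list, e::nat). length v = n}"
  let ?g = "\<lambda>(k, a). beta_pow_mult k (glide_poly a)"
  have gval: "?g (k, a) (v, e) = (if k \<le> e then int (card {b. is_glide a b \<and> map fst b = v \<and> ex b = e - k}) else 0)"
    for k a v e by (simp add: beta_pow_mult_def glide_poly_def)
  show ?thesis
  proof (rule triangular_basis[where S = ?S and L = "\<lambda>(k, a). (a, k)" and R = R])
    show "polys_beta n = {f. finite {m. f m \<noteq> 0} \<and> (\<forall>m. f m \<noteq> 0 \<longrightarrow> m \<in> ?S)}"
      unfolding polys_beta_def by auto
    show "bij_betw (\<lambda>(k, a). (a, k)) {(k, a). length a = n} ?S"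
      by (rule bij_betw_byWitness[where f' = "\<lambda>(a, k). (k, a)"]) auto
  next
    fix i assume "i \<in> {(k::nat, a :: nat list). length a = n}"
    then obtain k a where i: "i = (k, a)" by auto
    show "?g i ((\<lambda>(k, a). (a, k)) i) = 1"
      using glides_self_set[of a] by (simp add: i beta_pow_mult_def glide_poly_def)
  next
    fix i m assume i: "i \<in> {(k::nat, a :: nat list). length a = n}" and nz: "?g i m \<noteq> 0"
    obtain k a where ika: "i = (k, a)" "length a = n" using i by auto
    obtain v e where m: "m = (v, e)" by (cases m)
    from nz have ke: "k \<le> e" and "card {b. is_glide a b \<and> map fst b = v \<and> ex b = e - k} \<noteq> 0"
      by (auto simp: ika m beta_pow_mult_def glide_poly_def split: if_splits)
    then obtain b where b: "is_glide a b" "map fst b = v" "ex b = e - k" by (metis (mono_tags, lifting) card.empty empty_Collect_eq)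
    note gp = glide_props[OF b(1)]
    show "m = (\<lambda>(k, a). (a, k)) i \<or> R ((\<lambda>(k, a). (a, k)) i) m"
    proof (cases "ex b = 0 \<and> v = a")
      case True then show ?thesis using ke b by (simp add: ika m)
    next
      case False
      have "R (a, k) (v, e)"
      proof (cases "ex b = 0")
        case True
        then have "W v \<noteq> W a" using False gp b by auto
        then show ?thesis using gp b ke True unfolding R_def by auto
      next
        case False
        then show ?thesis using gp b ke unfolding R_def by auto
      qed
      then show ?thesis by (simp add: ika m)
    qed
  next
    fix i assume i: "i \<in> {(k::nat, a :: nat list). length a = n}"
    obtain k a where ika: "i = (k, a)" "length a = n" using i by auto
    have "{m. ?g i m \<noteq> 0} \<subseteq> (\<lambda>b. (map fst b, ex b + k)) ` {b. is_glide a b}"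
    proof
      fix m assume "m \<in> {m. ?g i m \<noteq> 0}"
      moreover obtain v e where m: "m = (v, e)" by (cases m)
      ultimately have ke: "k \<le> e" and "card {b. is_glide a b \<and> map fst b = v \<and> ex b = e - k} \<noteq> 0"
        by (auto simp: ika beta_pow_mult_def glide_poly_def split: if_splits)
      then obtain b where b: "is_glide a b" "map fst b = v" "ex b = e - k" by (metis (mono_tags, lifting) card.empty empty_Collect_eq)
      then show "m \<in> (\<lambda>b. (map fst b, ex b + k)) ` {b. is_glide a b}" using ke m by force
    qed
    then show "finite {m. ?g i m \<noteq> 0}" using glides_finite finite_subset by blast
  next
    fix i m assume i: "i \<in> {(k::nat, a :: nat list). length a = n}" and nz: "?g i m \<noteq> 0"
    obtain k a where ika: "i = (k, a)" "length a = n" using i by auto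
    obtain v e where m: "m = (v, e)" by (cases m)
    from nz have "card {b. is_glide a b \<and> map fst b = v \<and> ex b = e - k} \<noteq> 0"
      by (auto simp: ika m beta_pow_mult_def glide_poly_def split: if_splits)
    then obtain b where b: "is_glide a b" "map fst b = v" by (metis (mono_tags, lifting) card.empty empty_Collect_eq)
    then show "m \<in> ?S" using glide_props[OF b(1)] ika m by auto
  next
    show "\<And>x. \<not> R x x" by (auto simp: R_def)
    show "\<And>x y z. R x y \<Longrightarrow> R y z \<Longrightarrow> R x z" by (auto simp: R_def)
    show "\<And>x y. R x y \<Longrightarrow> x \<in> ?S \<Longrightarrow> y \<in> ?S" by (auto simp: R_def)
  next
    fix x assume "x \<in> ?S"
    then obtain v e where x: "x = (v, e)" "length v = n" by auto
    let ?A = "{w. set w \<subseteq> {0..sum_list v + n} \<and> length w = n} \<times> {0..e + n}"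
    have "{y. R x y} \<subseteq> ?A"
    proof
      fix y assume "y \<in> {y. R x y}"
      moreover obtain w f where y: "y = (w, f)" by (cases y)
      ultimately have r: "R (v, e) (w, f)" using x by simp
      have lf: "length (flat w) \<le> length w" by (simp add: flat_def)
      have "set w \<subseteq> {0..sum_list v + n}"
      proof
        fix p assume "p \<in> set w"
        then have "p \<le> sum_list w" using member_le_sum_list[of p w] by simp
        then show "p \<in> {0..sum_list v + n}" using r lf x by (auto simp: R_def)
      qed
      then show "y \<in> ?A" using r lf x y by (auto simp: R_def)
    qed
    moreover have "finite ?A" by (intro finite_cartesian_product finite_lists_length_eq) auto
    ultimately show "finite {y. R x y}" by (rule finite_subset)
  qed
qed

lemma part2:
  "Z_basis {a. length a = n} glide_poly_m1 (polys n)"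
proof -
  define R where "R = (\<lambda>(v::nat list) (w::nat list). length w = length v \<and> sum_list v \<le> sum_list w \<and>
     length (flat v) + sum_list w \<le> length (flat w) + sum_list v \<and>
     (sum_list v < sum_list w \<or> (sum_list v = sum_list w \<and> W v < W w)))"
  let ?S = "{v::nat list. length v = n}"
  have ne: "\<exists>b. is_glide a b \<and> map fst b = v" if "glide_poly_m1 a v \<noteq> 0" for a v
  proof (rule ccontr)
    assume "\<not> (\<exists>b. is_glide a b \<and> map fst b = v)"
    then have E: "{b. is_glide a b \<and> map fst b = v} = {}" by auto
    show False using that unfolding glide_poly_m1_def E by simp
  qed
  show ?thesis
  proof (rule triangular_basis[where S = ?S and L = id and R = R])
    show "polys n = {f. finite {m. f m \<noteq> 0} \<and> (\<forall>m. f m \<noteq> 0 \<longrightarrow> m \<in> ?S)}"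
      unfolding polys_def by auto
    show "bij_betw id {a. length a = n} ?S" by simp
  next
    fix a :: "nat list" assume "a \<in> {a. length a = n}"
    have "{b. is_glide a b \<and> map fst b = a} = {map (\<lambda>x. (x, False)) a}"
    proof -
      have "ex b = 0" if "is_glide a b" "map fst b = a" for b
        using glide_props[OF that(1)] that(2) by auto
      then have "{b. is_glide a b \<and> map fst b = a} = {b. is_glide a b \<and> map fst b = a \<and> ex b = 0}"
        by auto
      then show ?thesis using glides_self_set by simp
    qed
    then show "glide_poly_m1 a (id a) = 1" by (simp add: glide_poly_m1_def ex_def)
  next
    fix a :: "nat list" and w assume "a \<in> {a. length a = n}" and nz: "glide_poly_m1 a w \<noteq> 0"
    obtain b where b: "is_glide a b" "map fst b = w" using ne[OF nz] by blast
    note gp = glide_props[OF b(1)]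
    show "w = id a \<or> R (id a) w"
    proof (cases "ex b = 0 \<and> w = a")
      case True then show ?thesis by simp
    next
      case False
      have "R a w"
      proof (cases "ex b = 0")
        case True
        then have "W w \<noteq> W a" using False gp b by auto
        then show ?thesis using gp b True unfolding R_def by auto
      next
        case False
        then show ?thesis using gp b unfolding R_def by auto
      qed
      then show ?thesis by simp
    qed
  next
    fix a :: "nat list" assume "a \<in> {a. length a = n}"
    have "{m. glide_poly_m1 a m \<noteq> 0} \<subseteq> (map fst) ` {b. is_glide a b}"
      using ne by blast
    then show "finite {m. glide_poly_m1 a m \<noteq> 0}" using glides_finite finite_subset by blast
  next
    fix a :: "nat list" and m assume "a \<in> {a. length a = n}" and nz: "glide_poly_m1 a m \<noteq> 0"
    obtain b where b: "is_glide a b" "map fst b = m" using ne[OF nz] by blast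
    then show "m \<in> ?S" using glide_props[OF b(1)] \<open>a \<in> _\<close> by auto
  next
    show "\<And>x. \<not> R x x" by (auto simp: R_def)
    show "\<And>x y z. R x y \<Longrightarrow> R y z \<Longrightarrow> R x z" by (auto simp: R_def)
    show "\<And>x y. R x y \<Longrightarrow> x \<in> ?S \<Longrightarrow> y \<in> ?S" by (auto simp: R_def)
  next
    fix v assume v: "v \<in> ?S"
    let ?A = "{w. set w \<subseteq> {0..sum_list v + n} \<and> length w = n}"
    have "{w. R v w} \<subseteq> ?A"
    proof
      fix w assume "w \<in> {w. R v w}"
      then have r: "R v w" by simp
      have lf: "length (flat w) \<le> length w" by (simp add: flat_def)
      have "set w \<subseteq> {0..sum_list v + n}"
      proof
        fix p assume "p \<in> set w"
        then have "p \<le> sum_list w" using member_le_sum_list[of p w] by simp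
        then show "p \<in> {0..sum_list v + n}" using r lf v by (auto simp: R_def)
      qed
      then show "w \<in> ?A" using r v by (auto simp: R_def)
    qed
    moreover have "finite ?A" by (intro finite_lists_length_eq) auto
    ultimately show "finite {w. R v w}" by (rule finite_subset)
  qed
qed

theorem mainTheorem1:
  fixes n :: nat
  assumes "n \<ge> 1"
  shows "Z_basis {(k, a). length a = n} (\<lambda>(k, a). beta_pow_mult k (glide_poly a)) (polys_beta n)
         \<and> Z_basis {a. length a = n} glide_poly_m1 (polys n)"
  using part1 part2 by blast


end
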